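(* Let $R$ be a ring. (a) If $\dim R=0$ then $R$ is Cohen-Macaulay. (b) If $R$ is a one-dimensional domain then $R$ is Cohen-Macaulay.
   Context: All rings are commutative with identity; $\dim$ is Krull dimension. For $x\in R$ let $C(x)$ be the complex $0\to R\to R_x\to 0$ ($R$ in degree $0$, natural localization map); for a finite sequence $\mathbf x=x_1,\dots,x_\ell$ put $C(\mathbf x)=C(x_1)\otimes_R\cdots\otimes_R C(x_\ell)$ and let $H^i_{\mathbf x}(M)$ be the $i$th cohomology of $C(\mathbf x)\otimes_R M$; $\ell(\mathbf x)=\ell$. Let $K(x)$ be $0\to R\xrightarrow{x}R\to 0$ (degrees $1,0$), $K(\mathbf x)=K(x_1)\otimes\cdots\otimes K(x_\ell)$, $H_i(\mathbf x)$ its homology. For $m\ge n$ the chain map $K(\mathbf x^m)\to K(\mathbf x^n)$ ($\mathbf x^m=x_1^m,\dots,x_\ell^m$) is the tensor product of the maps $K(x_i^m)\to K(x_i^n)$ given by multiplication by $x_i^{m-n}$ in degree $1$ and identity in degree $0$. $\mathbf x$ is weakly proregular if for every $n$ there is $m\ge n$ with $H_i(\mathbf x^m)\to H_i(\mathbf x^n)$ zero for all $i\ge1$. $\mathbf x$ is a parameter sequence on $R$ if it is weakly proregular, $(\mathbf x)R\neq R$, and $H^{\ell(\mathbf x)}_{\mathbf x}(R)_p\neq0$ for every prime $p\supseteq(\mathbf x)R$ (the empty sequence is a parameter sequence, and also a regular sequence). It is a strong parameter sequence if $x_1,\dots,x_i$ is a parameter sequence for each $i=1,\dots,\ell(\mathbf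 x)$. A regular sequence on $M$: each $x_i$ is a non-zero-divisor on $M/(x_1,\dots,x_{i-1})M$ and $M\neq(\mathbf x)M$. A ring $R$ is Cohen-Macaulay if every strong parameter sequence on $R$ is a regular sequence on $R$. *)

theory Defs
  imports Main "HOL-Library.Extended_Real"
begin

definition is_ideal :: "'a::comm_ring_1 set \<Rightarrow> bool" where
  "is_ideal I \<longleftrightarrow> 0 \<in> I \<and> (\<forall>a\<in>I. \<forall>b\<in>I. a + b \<in> I) \<and> (\<forall>r. \<forall>a\<in>I. r * a \<in> I)"

definition prime_ideal :: "'a::comm_ring_1 set \<Rightarrow> bool" where
  "prime_ideal P \<longleftrightarrow> is_ideal P \<and> P \<noteq> UNIV \<and> (\<forall>a b. a * b \<in> P \<longrightarrow> a \<in> P \<or> b \<in> P)"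

text \<open>Krull dimension: supremum of lengths n of strict chains P0 < P1 < ... < Pn of primes.
  Valued in ereal, so the zero ring (no primes) has dimension -infinity.\<close>
definition krull_dim :: "'a::comm_ring_1 itself \<Rightarrow> ereal" where
  "krull_dim _ = Sup {ereal (real n) | n. \<exists>P :: nat \<Rightarrow> 'a set.
      (\<forall>i\<le>n. prime_ideal (P i)) \<and> (\<forall>i<n. P i \<subset> P (Suc i))}"

definition is_domain :: "'a::comm_ring_1 itself \<Rightarrow> bool" where
  "is_domain _ \<longleftrightarrow> (0::'a) \<noteq> 1 \<and> (\<forall>a b::'a. a * b = 0 \<longrightarrow> a = 0 \<or> b = 0)"

definition ideal_of :: "'a::comm_ring_1 list \<Rightarrow> 'a set" where
  "ideal_of xs = {(\<Sum>i<length xs. a i * xs ! i) | a. True}"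

definition pow_seq :: "'a::comm_ring_1 list \<Rightarrow> nat \<Rightarrow> 'a list" where
  "pow_seq xs m = map (\<lambda>x. x ^ m) xs"

text \<open>A chain of degree i is a family of coefficients indexed by the basis elements
  e_S = e_{j1} \<and> ... \<and> e_{ji}, S a subset of {0..<l} of cardinality i (j1 < ... < ji).\<close>
definition koszul_chain :: "nat \<Rightarrow> nat \<Rightarrow> (nat set \<Rightarrow> 'a::comm_ring_1) \<Rightarrow> bool" where
  "koszul_chain l i c \<longleftrightarrow> (\<forall>S. c S \<noteq> 0 \<longrightarrow> S \<subseteq> {..<l} \<and> card S = i)"

text \<open>Differential d(e_S) = sum over j in S of (-1)^(#{k in S. k < j}) x_j e_{S - {j}},
  i.e. the tensor product differential with the Koszul sign rule.\<close>
definition koszul_d :: "'a::comm_ring_1 list \<Rightarrow> (nat set \<Rightarrow> 'a) \<Rightarrow> (nat set \<Rightarrow> 'a)" where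
  "koszul_d xs c = (\<lambda>T. \<Sum>j\<in>{..<length xs} - T.
      (-1) ^ card {k\<in>T. k < j} * xs ! j * c (insert j T))"

definition koszul_cycles :: "'a::comm_ring_1 list \<Rightarrow> nat \<Rightarrow> (nat set \<Rightarrow> 'a) set" where
  "koszul_cycles xs i = {c. koszul_chain (length xs) i c \<and> koszul_d xs c = (\<lambda>_. 0)}"

definition koszul_boundaries :: "'a::comm_ring_1 list \<Rightarrow> nat \<Rightarrow> (nat set \<Rightarrow> 'a) set" where
  "koszul_boundaries xs i = {koszul_d xs b | b. koszul_chain (length xs) (Suc i) b}"

text \<open>The chain map K(x^m) \<rightarrow> K(x^n), k = m - n: tensor product of the maps
  (multiplication by x_j^k in degree 1, identity in degree 0), i.e.
  e_S \<mapsto> (prod_{j in S} x_j^k) e_S.\<close>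
definition koszul_map :: "'a::comm_ring_1 list \<Rightarrow> nat \<Rightarrow> (nat set \<Rightarrow> 'a) \<Rightarrow> (nat set \<Rightarrow> 'a)" where
  "koszul_map xs k c = (\<lambda>S. (\<Prod>j\<in>S. (xs ! j) ^ k) * c S)"

text \<open>H_i(x^m) \<rightarrow> H_i(x^n) is zero: every cycle maps to a boundary.\<close>
definition weakly_proregular :: "'a::comm_ring_1 list \<Rightarrow> bool" where
  "weakly_proregular xs \<longleftrightarrow> (\<forall>n\<ge>1. \<exists>m\<ge>n. \<forall>i\<ge>1.
      \<forall>c\<in>koszul_cycles (pow_seq xs m) i. koszul_map xs (m - n) c \<in> koszul_boundaries (pow_seq xs n) i)"

text \<open>C(x) \<otimes> R has top term R_y, y = x_1 \<cdots> x_l, and H^l_x(R) is the cokernel of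
  the sum of the localization maps R_{y/x_i} \<rightarrow> R_y. An element of R_y is written r/y^n;
  the image of a/(y/x_i)^m is a x_i^m / y^m. So the class of r/y^n vanishes in H^l iff
  r/y^n = sum_i a_i x_i^m / y^m in R_y for some m, a, i.e. y^k (r y^m - y^n sum_i a_i x_i^m) = 0.\<close>
definition cech_top_zero :: "'a::comm_ring_1 list \<Rightarrow> 'a \<Rightarrow> nat \<Rightarrow> bool" where
  "cech_top_zero xs r n \<longleftrightarrow> (\<exists>m k a. (prod_list xs) ^ k *
      (r * (prod_list xs) ^ m - (prod_list xs) ^ n * (\<Sum>i<length xs. a i * (xs ! i) ^ m)) = 0)"

text \<open>(H^l_x(R))_p \<noteq> 0: some element h has h/1 \<noteq> 0, i.e. s h \<noteq> 0 for all s \<notin> p.\<close>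
definition cech_top_localized_nonzero :: "'a::comm_ring_1 list \<Rightarrow> 'a set \<Rightarrow> bool" where
  "cech_top_localized_nonzero xs p \<longleftrightarrow>
     (\<exists>r n. \<forall>s. s \<notin> p \<longrightarrow> \<not> cech_top_zero xs (s * r) n)"

definition parameter_seq :: "'a::comm_ring_1 list \<Rightarrow> bool" where
  "parameter_seq xs \<longleftrightarrow> weakly_proregular xs \<and> ideal_of xs \<noteq> UNIV \<and>
     (\<forall>p. prime_ideal p \<and> ideal_of xs \<subseteq> p \<longrightarrow> cech_top_localized_nonzero xs p)"

definition strong_parameter_seq :: "'a::comm_ring_1 list \<Rightarrow> bool" where
  "strong_parameter_seq xs \<longleftrightarrow> (\<forall>i\<in>{1..length xs}. parameter_seq (take i xs))"

definition regular_seq :: "'a::comm_ring_1 list \<Rightarrow> bool" where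
  "regular_seq xs \<longleftrightarrow>
     (\<forall>i<length xs. \<forall>r. xs ! i * r \<in> ideal_of (take i xs) \<longrightarrow> r \<in> ideal_of (take i xs)) \<and>
     ideal_of xs \<noteq> UNIV"

definition cohen_macaulay :: "'a::comm_ring_1 itself \<Rightarrow> bool" where
  "cohen_macaulay _ \<longleftrightarrow> (\<forall>xs :: 'a list. strong_parameter_seq xs \<longrightarrow> regular_seq xs)"

end

theory Submission
  imports Defs
begin

lemma ideal_zero: "is_ideal I \<Longrightarrow> 0 \<in> I" by (simp add: is_ideal_def)
lemma ideal_add: "is_ideal I \<Longrightarrow> a \<in> I \<Longrightarrow> b \<in> I \<Longrightarrow> a + b \<in> I" by (simp add: is_ideal_def)
lemma ideal_mult: "is_ideal I \<Longrightarrow> a \<in> I \<Longrightarrow> r * a \<in> I" by (simp add: is_ideal_def)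
lemma ideal_multR: "is_ideal I \<Longrightarrow> a \<in> I \<Longrightarrow> a * r \<in> I" by (metis mult.commute ideal_mult)
lemma ideal_sum: "is_ideal I \<Longrightarrow> (\<forall>i<(n::nat). f i \<in> I) \<Longrightarrow> (\<Sum>i<n. f i) \<in> I"
  by (induction n arbitrary: f) (auto simp: ideal_zero ideal_add)

lemma prime_one: "prime_ideal P \<Longrightarrow> (1::'a::comm_ring_1) \<notin> P"
proof
  assume "prime_ideal P" "(1::'a) \<in> P"
  then have "\<forall>r. r * 1 \<in> P" unfolding prime_ideal_def is_ideal_def by (metis mult.commute)
  then have "P = UNIV" by auto
  then show False using \<open>prime_ideal P\<close> by (simp add: prime_ideal_def)
qed

lemma prime_mult: "prime_ideal P \<Longrightarrow> a \<notin> P \<Longrightarrow> b \<notin> P \<Longrightarrow> a * b \<notin> P"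
  by (auto simp: prime_ideal_def)

lemma prime_pow: "prime_ideal P \<Longrightarrow> (t::'a::comm_ring_1) \<notin> P \<Longrightarrow> t ^ n \<notin> P"
  by (induction n) (auto simp: prime_one prime_mult)

lemma zorn_prime:
  fixes I S :: "'a::comm_ring_1 set"
  assumes I: "is_ideal I" and S1: "1 \<in> S" and Sm: "\<forall>a\<in>S. \<forall>b\<in>S. a * b \<in> S" and IS: "I \<inter> S = {}"
  shows "\<exists>q. prime_ideal q \<and> I \<subseteq> q \<and> q \<inter> S = {}"
proof -
  define A where "A = {J. is_ideal J \<and> I \<subseteq> J \<and> J \<inter> S = {}}"
  have "\<exists>M\<in>A. \<forall>X\<in>A. M \<subseteq> X \<longrightarrow> X = M"
  proof (rule Zorn_Lemma2, intro ballI)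
    fix C assume C: "C \<in> chains A"
    show "\<exists>U\<in>A. \<forall>X\<in>C. X \<subseteq> U"
    proof (cases "C = {}")
      case True then show ?thesis using I IS by (auto simp: A_def)
    next
      case False
      have CA: "C \<subseteq> A" using C chainsD2 by blast
      have "is_ideal (\<Union>C)"
        unfolding is_ideal_def
      proof (intro conjI ballI allI)
        obtain X where "X \<in> C" using False by blast
        then show "0 \<in> \<Union>C" using CA unfolding A_def by (blast intro: ideal_zero)
      next
        fix a b assume "a \<in> \<Union>C" "b \<in> \<Union>C"
        then obtain X Y where XY: "X \<in> C" "Y \<in> C" "a \<in> X" "b \<in> Y" by blast
        then have "X \<subseteq> Y \<or> Y \<subseteq> X" using C chainsD by blast
        then show "a + b \<in> \<Union>C"
        proof
          assume "X \<subseteq> Y" then show ?thesis using XY CA unfolding A_def by (blast intro: ideal_add)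
        next
          assume "Y \<subseteq> X" then show ?thesis using XY CA unfolding A_def by (blast intro: ideal_add)
        qed
      next
        fix r a assume "a \<in> \<Union>C"
        then obtain X where "X \<in> C" "a \<in> X" by blast
        then show "r * a \<in> \<Union>C" using CA by (auto simp: A_def intro: ideal_mult)
      qed
      moreover have "I \<subseteq> \<Union>C" using False CA by (auto simp: A_def)
      moreover have "\<Union>C \<inter> S = {}" using CA by (auto simp: A_def)
      ultimately show ?thesis by (auto simp: A_def)
    qed
  qed
  then obtain M where MA: "M \<in> A" and Mmax: "\<forall>X\<in>A. M \<subseteq> X \<longrightarrow> X = M" by blast
  have Mi: "is_ideal M" and IM: "I \<subseteq> M" and MS: "M \<inter> S = {}" using MA by (auto simp: A_def)
  have ext: "\<exists>m r. m \<in> M \<and> m + r * a \<in> S" if "a \<notin> M" for a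
  proof (rule ccontr)
    assume nex: "\<not> ?thesis"
    define Ma where "Ma = {m + r * a | m r. m \<in> M}"
    have Maid: "is_ideal Ma" unfolding is_ideal_def Ma_def
    proof (intro conjI ballI allI)
      have "0 \<in> M" using Mi ideal_zero by blast
      then show "0 \<in> {m + r * a |m r. m \<in> M}" by (intro CollectI exI[of _ 0]) auto
    next
      fix x y assume "x \<in> {m + r * a |m r. m \<in> M}" "y \<in> {m + r * a |m r. m \<in> M}"
      then obtain m1 r1 m2 r2 where "x = m1 + r1 * a" "y = m2 + r2 * a" "m1 \<in> M" "m2 \<in> M" by blast
      then show "x + y \<in> {m + r * a |m r. m \<in> M}"
      proof -
        have "x + y = (m1 + m2) + (r1 + r2) * a" using \<open>x = m1 + r1 * a\<close> \<open>y = m2 + r2 * a\<close> by (simp add: algebra_simps)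
        moreover have "m1 + m2 \<in> M" using Mi \<open>m1 \<in> M\<close> \<open>m2 \<in> M\<close> ideal_add by blast
        ultimately show ?thesis by blast
      qed
    next
      fix s x assume "x \<in> {m + r * a |m r. m \<in> M}"
      then obtain m1 r1 where "x = m1 + r1 * a" "m1 \<in> M" by blast
      then show "s * x \<in> {m + r * a |m r. m \<in> M}"
      proof -
        have "s * x = s * m1 + (s * r1) * a" using \<open>x = m1 + r1 * a\<close> by (simp add: algebra_simps)
        moreover have "s * m1 \<in> M" using Mi \<open>m1 \<in> M\<close> ideal_mult by blast
        ultimately show ?thesis by blast
      qed
    qed
    have Mina: "m \<in> Ma" if "m \<in> M" for m
    proof -
      have "m = m + 0 * a" by simp
      then show ?thesis unfolding Ma_def using that by blast
    qed
    moreover have "I \<subseteq> Ma" using IM Mina by blast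
    moreover have "Ma \<inter> S = {}" using nex unfolding Ma_def by auto
    ultimately have "Ma \<in> A" using Maid by (simp add: A_def)
    moreover have "M \<subseteq> Ma" using Mina by blast
    ultimately have "Ma = M" using Mmax by blast
    moreover have "a \<in> Ma"
    proof -
      have "a = 0 + 1 * a" by simp
      then show ?thesis unfolding Ma_def using Mi ideal_zero by blast
    qed
    ultimately show False using that by blast
  qed
  have "prime_ideal M" unfolding prime_ideal_def
  proof (intro conjI allI impI Mi)
    show "M \<noteq> UNIV" using MS S1 by auto
  next
    fix a b assume ab: "a * b \<in> M"
    show "a \<in> M \<or> b \<in> M"
    proof (rule ccontr)
      assume "\<not> ?thesis"
      then have "a \<notin> M" "b \<notin> M" by auto
      then obtain m1 r1 m2 r2 where h: "m1 \<in> M" "m1 + r1 * a \<in> S" "m2 \<in> M" "m2 + r2 * b \<in> S"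
        using ext by meson
      have "(m1 + r1 * a) * (m2 + r2 * b) \<in> S" using h Sm by blast
      moreover have "(m1 + r1 * a) * (m2 + r2 * b) = m1 * (m2 + r2 * b) + m2 * (r1 * a) + (r1 * r2) * (a * b)"
        by (simp add: algebra_simps)
      moreover have "m1 * (m2 + r2 * b) + m2 * (r1 * a) + (r1 * r2) * (a * b) \<in> M"
        using h ab Mi by (meson ideal_add ideal_mult ideal_multR)
      ultimately show False using MS by auto
    qed
  qed
  then show ?thesis using IM MS by blast
qed


lemma minimal_prime:
  fixes p I :: "'a::comm_ring_1 set"
  assumes p: "prime_ideal p" and I: "is_ideal I" and Ip: "I \<subseteq> p"
    and minp: "\<forall>q. prime_ideal q \<and> I \<subseteq> q \<and> q \<subseteq> p \<longrightarrow> q = p" and y: "y \<in> p"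
  shows "\<exists>t N. t \<notin> p \<and> t * y ^ N \<in> I"
proof (rule ccontr)
  assume nex: "\<not> ?thesis"
  define S where "S = {t * y ^ N | t N. t \<notin> p}"
  have "(1::'a) = 1 * y ^ 0" by simp
  then have "1 \<in> S" unfolding S_def using prime_one[OF p] by blast
  moreover have "\<forall>a\<in>S. \<forall>b\<in>S. a * b \<in> S"
  proof (intro ballI)
    fix a b assume "a \<in> S" "b \<in> S"
    then obtain t1 N1 t2 N2 where h: "a = t1 * y ^ N1" "b = t2 * y ^ N2" "t1 \<notin> p" "t2 \<notin> p"
      unfolding S_def by blast
    have "a * b = (t1 * t2) * y ^ (N1 + N2)" using h by (simp add: algebra_simps power_add)
    moreover have "t1 * t2 \<notin> p" using h p prime_mult by blast
    ultimately show "a * b \<in> S" unfolding S_def by blast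
  qed
  moreover have "I \<inter> S = {}" using nex unfolding S_def by blast
  ultimately obtain q where q: "prime_ideal q" "I \<subseteq> q" "q \<inter> S = {}"
    using zorn_prime[OF I] by blast
  have "q \<subseteq> p"
  proof
    fix z assume "z \<in> q"
    show "z \<in> p"
    proof (rule ccontr)
      assume "z \<notin> p"
      then have "z * y ^ 0 \<in> S" unfolding S_def by blast
      then show False using q \<open>z \<in> q\<close> by auto
    qed
  qed
  moreover have "y \<notin> q"
  proof
    assume "y \<in> q"
    have "1 * y ^ 1 \<in> S" unfolding S_def using prime_one[OF p] by blast
    then show False using q \<open>y \<in> q\<close> by auto
  qed
  ultimately show False using minp q y by blast
qed

lemma exists_prime_over:
  fixes J :: "'a::comm_ring_1 set"
  assumes "is_ideal J" "J \<noteq> UNIV"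
  shows "\<exists>p. prime_ideal p \<and> J \<subseteq> p"
proof -
  have "1 \<notin> J"
  proof
    assume "1 \<in> J"
    then have "r * 1 \<in> J" for r using assms ideal_mult by blast
    then show False using assms by auto
  qed
  then show ?thesis using zorn_prime[OF assms(1), of "{1}"] by auto
qed

lemma ideal_of_ideal: "is_ideal (ideal_of xs)"
  unfolding is_ideal_def ideal_of_def
proof (intro conjI ballI allI)
  show "0 \<in> {\<Sum>i<length xs. a i * xs ! i |a. True}"
    by (rule CollectI, rule exI[of _ "\<lambda>_. 0"]) simp
next
  fix u v assume "u \<in> {\<Sum>i<length xs. a i * xs ! i |a. True}" "v \<in> {\<Sum>i<length xs. a i * xs ! i |a. True}"
  then obtain a b where "u = (\<Sum>i<length xs. a i * xs ! i)" "v = (\<Sum>i<length xs. b i * xs ! i)" by blast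
  then have "u + v = (\<Sum>i<length xs. (a i + b i) * xs ! i)" by (simp add: algebra_simps sum.distrib)
  then show "u + v \<in> {\<Sum>i<length xs. a i * xs ! i |a. True}" by (intro CollectI exI[of _ "\<lambda>i. a i + b i"]) simp
next
  fix r u assume "u \<in> {\<Sum>i<length xs. a i * xs ! i |a. True}"
  then obtain a where "u = (\<Sum>i<length xs. a i * xs ! i)" by blast
  then have "r * u = (\<Sum>i<length xs. (r * a i) * xs ! i)" by (simp add: algebra_simps sum_distrib_left)
  then show "r * u \<in> {\<Sum>i<length xs. a i * xs ! i |a. True}" by (intro CollectI exI[of _ "\<lambda>i. r * a i"]) simp
qed

lemma ideal_of_sub: "is_ideal P \<Longrightarrow> set xs \<subseteq> P \<Longrightarrow> ideal_of xs \<subseteq> P"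
  unfolding ideal_of_def
proof clarify
  fix a assume "is_ideal P" "set xs \<subseteq> P"
  show "(\<Sum>i<length xs. a i * xs ! i) \<in> P"
  proof (rule ideal_sum)
    show "is_ideal P" by fact
    show "\<forall>i<length xs. a i * xs ! i \<in> P"
    proof (intro allI impI)
      fix i assume "i < length xs"
      then have "xs ! i \<in> P" using nth_mem \<open>set xs \<subseteq> P\<close> by blast
      then show "a i * xs ! i \<in> P" using ideal_mult \<open>is_ideal P\<close> by blast
    qed
  qed
qed

lemma ideal_of_mem: "i < length xs \<Longrightarrow> xs ! i \<in> ideal_of xs"
  unfolding ideal_of_def
proof
  assume "i < length xs"
  have "(\<Sum>j<length xs. (if j = i then 1 else 0) * xs ! j) = (\<Sum>j<length xs. if j = i then xs ! j else 0)"
    by (rule sum.cong) auto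
  also have "\<dots> = xs ! i" using \<open>i < length xs\<close> by (simp add: sum.delta)
  finally show "\<exists>a. xs ! i = (\<Sum>j<length xs. a j * xs ! j) \<and> True"
    by (intro exI[of _ "\<lambda>j. if j = i then 1 else 0"]) simp
qed

lemma ideal_of_nil: "ideal_of [] = {0}"
  unfolding ideal_of_def by simp

lemma ideal_of_single: "z \<in> ideal_of [x] \<Longrightarrow> \<exists>u. z = u * x"
  unfolding ideal_of_def by auto

lemma chain1:
  fixes p q :: "'a::comm_ring_1 set"
  assumes "krull_dim TYPE('a) = 0" "prime_ideal q" "prime_ideal p" "q \<subset> p"
  shows False
proof -
  define P where "P = (\<lambda>i::nat. if i = 0 then q else p)"
  have "ereal (real 1) \<in> {ereal (real n) | n. \<exists>P :: nat \<Rightarrow> 'a set.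
      (\<forall>i\<le>n. prime_ideal (P i)) \<and> (\<forall>i<n. P i \<subset> P (Suc i))}"
    using assms unfolding P_def
    by (intro CollectI exI[of _ 1] conjI refl exI[of _ P]) (auto simp: P_def)
  then have "ereal 1 \<le> krull_dim TYPE('a)" unfolding krull_dim_def by (simp add: Sup_upper)
  then show False using assms by simp
qed

lemma chain2:
  fixes a b c :: "'a::comm_ring_1 set"
  assumes "krull_dim TYPE('a) = 1" "prime_ideal a" "prime_ideal b" "prime_ideal c" "a \<subset> b" "b \<subset> c"
  shows False
proof -
  define P where "P = (\<lambda>i::nat. if i = 0 then a else if i = 1 then b else c)"
  have h1: "\<forall>i\<le>2. prime_ideal (P i)"
  proof (intro allI impI)
    fix i :: nat assume "i \<le> 2"
    then show "prime_ideal (P i)" using assms unfolding P_def by simp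
  qed
  have h2: "\<forall>i<2. P i \<subset> P (Suc i)"
  proof (intro allI impI)
    fix i :: nat assume "i < 2"
    then have "i = 0 \<or> i = 1" by linarith
    then show "P i \<subset> P (Suc i)" using assms unfolding P_def by auto
  qed
  have "ereal (real 2) \<in> {ereal (real n) | n. \<exists>P :: nat \<Rightarrow> 'a set.
      (\<forall>i\<le>n. prime_ideal (P i)) \<and> (\<forall>i<n. P i \<subset> P (Suc i))}"
    using h1 h2 by blast
  then have "ereal (real 2) \<le> krull_dim TYPE('a)" unfolding krull_dim_def by (rule Sup_upper)
  then show False using assms by simp
qed

lemma dim0_nontriv:
  assumes "krull_dim TYPE('a::comm_ring_1) = 0"
  shows "(0::'a) \<noteq> 1"
proof
  assume h: "(0::'a) = 1"
  have "\<not> prime_ideal (P :: 'a set)" for P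
  proof
    assume "prime_ideal P"
    then have "0 \<in> P" "P \<noteq> UNIV" by (auto simp: prime_ideal_def is_ideal_def)
    moreover have "x = 0" for x :: 'a by (metis h mult_1 mult_zero_left)
    ultimately show False by (metis UNIV_eq_I)
  qed
  then have "{ereal (real n) | n. \<exists>P :: nat \<Rightarrow> 'a set.
      (\<forall>i\<le>n. prime_ideal (P i)) \<and> (\<forall>i<n. P i \<subset> P (Suc i))} = {}" by blast
  then have "krull_dim TYPE('a) = Sup ({}::ereal set)" unfolding krull_dim_def by (simp only:)
  then show False using assms by (simp add: bot_ereal_def)
qed

lemma domain_zero_prime:
  assumes "is_domain TYPE('a::comm_ring_1)"
  shows "prime_ideal ({0} :: 'a set)"
proof -
  have "(1::'a) \<notin> {0}" using assms unfolding is_domain_def by auto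
  then have "{0::'a} \<noteq> UNIV" by blast
  then show ?thesis using assms unfolding prime_ideal_def is_ideal_def is_domain_def by auto
qed

lemma take1: "xs \<noteq> [] \<Longrightarrow> take 1 xs = [xs ! 0]" by (cases xs) auto
lemma take2: "length xs \<ge> 2 \<Longrightarrow> take 2 xs = [xs ! 0, xs ! 1]"
  by (cases xs; cases "tl xs") (auto simp: numeral_2_eq_2)

lemma strong_take: "strong_parameter_seq xs \<Longrightarrow> 1 \<le> i \<Longrightarrow> i \<le> length xs \<Longrightarrow> parameter_seq (take i xs)"
  unfolding strong_parameter_seq_def by auto

lemma cech_zero_intro:
  "prod_list xs ^ k * (r * prod_list xs ^ m - prod_list xs ^ n * (\<Sum>i<length xs. a i * xs ! i ^ m)) = 0
   \<Longrightarrow> cech_top_zero xs r n"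
  unfolding cech_top_zero_def by blast

lemma dim0_no_param:
  assumes d: "krull_dim TYPE('a::comm_ring_1) = 0" and par: "parameter_seq [x::'a]"
  shows False
proof -
  have "ideal_of [x] \<noteq> UNIV" using par by (simp add: parameter_seq_def)
  then obtain p where p: "prime_ideal p" "ideal_of [x] \<subseteq> p"
    using exists_prime_over ideal_of_ideal by blast
  have xp: "x \<in> p" using p ideal_of_mem[of 0 "[x]"] by auto
  have i0: "is_ideal ({0}::'a set)" by (simp add: is_ideal_def)
  have "\<forall>q. prime_ideal q \<and> {0} \<subseteq> q \<and> q \<subseteq> p \<longrightarrow> q = p"
    using chain1[OF d] p by blast
  then obtain t N where t: "t \<notin> p" "t * x ^ N = 0"
    using minimal_prime[OF p(1) i0 _ _ xp] p(1) by (auto simp: prime_ideal_def is_ideal_def)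
  have "cech_top_localized_nonzero [x] p" using par p by (simp add: parameter_seq_def)
  then obtain r n where rn: "\<forall>s. s \<notin> p \<longrightarrow> \<not> cech_top_zero [x] (s * r) n"
    unfolding cech_top_localized_nonzero_def by blast
  have "x ^ N * (t * r) = (t * x ^ N) * r" by (simp add: algebra_simps)
  then have "cech_top_zero [x] (t * r) n"
    using t by (intro cech_zero_intro[where m=0 and k=N and a="\<lambda>_. 0"]) simp
  then show False using rn t by blast
qed

lemma domain_param_nonzero:
  assumes D: "is_domain TYPE('a::comm_ring_1)" and par: "parameter_seq [x::'a]"
  shows "x \<noteq> 0"
proof
  assume x0: "x = 0"
  have pz: "prime_ideal ({0}::'a set)" using domain_zero_prime[OF D] .
  have "is_ideal ({0}::'a set)" by (simp add: is_ideal_def)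
  then have "ideal_of [x] \<subseteq> {0}" using x0 ideal_of_sub[of "{0}" "[x]"] by simp
  then have "cech_top_localized_nonzero [x] {0}" using par pz by (simp add: parameter_seq_def)
  then obtain r n where rn: "\<forall>s. s \<notin> {0} \<longrightarrow> \<not> cech_top_zero [x] (s * r) n"
    unfolding cech_top_localized_nonzero_def by blast
  have "cech_top_zero [x] (1 * r) n"
    using x0 by (intro cech_zero_intro[where m=0 and k=1 and a="\<lambda>_. 0"]) simp
  moreover have "(1::'a) \<notin> {0}" using D by (auto simp: is_domain_def)
  ultimately show False using rn by blast
qed

lemma dim1_no_param2:
  assumes D: "is_domain TYPE('a::comm_ring_1)" and d: "krull_dim TYPE('a) = 1"
    and x0: "x \<noteq> 0" and par: "parameter_seq [x::'a, y]"
  shows False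
proof -
  have "ideal_of [x, y] \<noteq> UNIV" using par by (simp add: parameter_seq_def)
  then obtain p where p: "prime_ideal p" "ideal_of [x, y] \<subseteq> p"
    using exists_prime_over ideal_of_ideal by blast
  have xp: "x \<in> p" using p ideal_of_mem[of 0 "[x, y]"] by auto
  have yp: "y \<in> p" using p ideal_of_mem[of 1 "[x, y]"] by auto
  have pz: "prime_ideal ({0}::'a set)" using domain_zero_prime[OF D] .
  have pi: "is_ideal p" using p by (simp add: prime_ideal_def)
  have Ixp: "ideal_of [x] \<subseteq> p" using ideal_of_sub[OF pi, of "[x]"] xp by simp
  have "\<forall>q. prime_ideal q \<and> ideal_of [x] \<subseteq> q \<and> q \<subseteq> p \<longrightarrow> q = p"
  proof (intro allI impI)
    fix q assume q: "prime_ideal q \<and> ideal_of [x] \<subseteq> q \<and> q \<subseteq> p"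
    have xq: "x \<in> q" using q ideal_of_mem[of 0 "[x]"] by auto
    have "{0} \<subset> q" using q xq x0 by (auto simp: prime_ideal_def is_ideal_def)
    then show "q = p" using chain2[OF d pz _ p(1)] q by blast
  qed
  then obtain t N where t: "t \<notin> p" "t * y ^ N \<in> ideal_of [x]"
    using minimal_prime[OF p(1) ideal_of_ideal Ixp _ yp] by blast
  then obtain u where u: "t * y ^ N = u * x" using ideal_of_single by blast
  have "cech_top_localized_nonzero [x, y] p" using par p by (simp add: parameter_seq_def)
  then obtain r n where rn: "\<forall>s. s \<notin> p \<longrightarrow> \<not> cech_top_zero [x, y] (s * r) n"
    unfolding cech_top_localized_nonzero_def by blast
  have tn: "t ^ n \<notin> p" using prime_pow p t by blast
  have key: "t ^ n * y ^ (N * n) = u ^ n * x ^ n"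
    by (metis u power_mult power_mult_distrib)
  have "cech_top_zero [x, y] (t ^ n * r) n"
  proof (rule cech_zero_intro[where m="n + N * n" and k=0 and a="\<lambda>i. if i = 0 then r * u ^ n else 0"])
    let ?m = "n + N * n"
    have "t ^ n * r * (x * y) ^ ?m = r * x ^ ?m * y ^ n * (t ^ n * y ^ (N * n))"
      by (simp add: power_add power_mult_distrib algebra_simps)
    also have "\<dots> = (x * y) ^ n * (r * u ^ n * x ^ ?m)"
      unfolding key by (simp add: power_mult_distrib algebra_simps)
    finally have e: "t ^ n * r * (x * y) ^ ?m = (x * y) ^ n * (r * u ^ n * x ^ ?m)" .
    show "prod_list [x, y] ^ 0 * (t ^ n * r * prod_list [x, y] ^ ?m - prod_list [x, y] ^ n *
      (\<Sum>i<length [x, y]. (if i = 0 then r * u ^ n else 0) * [x, y] ! i ^ ?m)) = 0"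
      using e by (simp add: numeral_2_eq_2)
  qed
  then show False using rn tn by blast
qed

theorem proposition4p4:
  shows "(krull_dim TYPE('a::comm_ring_1) = 0 \<longrightarrow> cohen_macaulay TYPE('a))
       \<and> (is_domain TYPE('a) \<and> krull_dim TYPE('a) = 1 \<longrightarrow> cohen_macaulay TYPE('a))"
proof (intro conjI impI)
  assume d: "krull_dim TYPE('a) = 0"
  show "cohen_macaulay TYPE('a)"
    unfolding cohen_macaulay_def
  proof (intro allI impI)
    fix xs :: "'a list" assume st: "strong_parameter_seq xs"
    show "regular_seq xs"
    proof (cases "xs = []")
      case True
      have "(1::'a) \<notin> {0}" using dim0_nontriv[OF d] by auto
      then have "ideal_of ([]::'a list) \<noteq> UNIV" unfolding ideal_of_nil by blast
      then show ?thesis using True by (simp add: regular_seq_def)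
    next
      case False
      then have "parameter_seq [xs ! 0]" using strong_take[OF st, of 1] take1[OF False]
        by (simp add: Suc_le_eq)
      then show ?thesis using dim0_no_param[OF d] by blast
    qed
  qed
next
  assume h: "is_domain TYPE('a) \<and> krull_dim TYPE('a) = 1"
  then have D: "is_domain TYPE('a)" and d: "krull_dim TYPE('a) = 1" by auto
  show "cohen_macaulay TYPE('a)"
    unfolding cohen_macaulay_def
  proof (intro allI impI)
    fix xs :: "'a list" assume st: "strong_parameter_seq xs"
    show "regular_seq xs"
    proof (cases "length xs \<ge> 2")
      case True
      then have ne: "xs \<noteq> []" by auto
      have "parameter_seq [xs ! 0]" using strong_take[OF st, of 1] take1[OF ne] ne
        by (simp add: Suc_le_eq)
      then have "xs ! 0 \<noteq> 0" using domain_param_nonzero[OF D] by blast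
      moreover have "parameter_seq [xs ! 0, xs ! 1]" using strong_take[OF st, of 2] take2[OF True] True
        by simp
      ultimately show ?thesis using dim1_no_param2[OF D d] by blast
    next
      case False
      then consider "xs = []" | x where "xs = [x]"
        by (cases xs; cases "tl xs") auto
      then show ?thesis
      proof cases
        case 1
        have "(1::'a) \<notin> {0}" using D unfolding is_domain_def by auto
        then have "ideal_of ([]::'a list) \<noteq> UNIV" unfolding ideal_of_nil by blast
        then show ?thesis using 1 by (simp add: regular_seq_def)
      next
        case 2
        then have par: "parameter_seq [x]" using strong_take[OF st, of 1] by simp
        then have x0: "x \<noteq> 0" using domain_param_nonzero[OF D] by blast
        have "ideal_of [x] \<noteq> UNIV" using par by (simp add: parameter_seq_def)
        moreover have "\<forall>i<length xs. \<forall>r. xs ! i * r \<in> ideal_of (take i xs) \<longrightarrow> r \<in> ideal_of (take i xs)"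
          using 2 x0 D by (auto simp: ideal_of_nil is_domain_def)
        ultimately show ?thesis using 2 by (simp add: regular_seq_def)
      qed
    qed
  qed
qed

end
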